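(* Let $G$ be a separable metrizable NSS group and let $X$ be a $G$-regular space. Then $X$ is compact and metrizable if and only if $C_p(X,G)$ is a TAP group with a countable network.
   Context: All spaces are Tychonoff and non-empty; topological groups are Hausdorff; $e$ is the identity of $G$. $C_p(X,G)$ is the group of continuous maps $X\to G$ with pointwise operations and the topology of pointwise convergence. $X$ is $G$-regular if for every closed $F\subseteq X$ and every $x\in X\setminus F$ there exist $f\in C_p(X,G)$ and $g\in G\setminus\{e\}$ with $f(x)=g$ and $f(F)\subseteq\{e\}$. NSS: some open neighborhood of the identity contains no nontrivial subgroup. A subset $A$ of a topological group $H$ is absolutely productive if for every injection $a:\mathbb{N}\to A$ and every $z:\mathbb{N}\to\mathbb{Z}$ the sequence $\left(\prod_{n=0}^{k}a(n)^{z(n)}\right)_{k}$ converges in $H$; $H$ is TAP if all absolutely productive subsets are finite. *)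

theory Defs
  imports "HOL-Analysis.Analysis" "HOL-Library.Function_Algebras"
begin

text \<open>Groups are written additively (type class group_add, not necessarily commutative).
  Integer multiple z*a (the paper's a^z).\<close>
definition zmul :: "int \<Rightarrow> 'h::group_add \<Rightarrow> 'h" where
  "zmul z a = (if 0 \<le> z then (((+) a) ^^ nat z) 0 else - ((((+) a) ^^ nat (- z)) 0))"

fun opsum :: "(nat \<Rightarrow> 'h::group_add) \<Rightarrow> (nat \<Rightarrow> int) \<Rightarrow> nat \<Rightarrow> 'h" where
  "opsum a z 0 = zmul (z 0) (a 0)"
| "opsum a z (Suc k) = opsum a z k + zmul (z (Suc k)) (a (Suc k))"

text \<open>Absolutely productive subset A of the topological group H (a subgroup of the ambient
  type, carrying the subspace topology).\<close>
definition absolutely_productive :: "'h::{group_add,topological_space} set \<Rightarrow> 'h set \<Rightarrow> bool" where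
  "absolutely_productive H A \<longleftrightarrow> A \<subseteq> H \<and>
     (\<forall>a z. inj a \<and> range a \<subseteq> A \<longrightarrow>
        (\<exists>L. limitin (subtopology euclidean H) (opsum a z) L sequentially))"

definition TAP :: "'h::{group_add,topological_space} set \<Rightarrow> bool" where
  "TAP H \<longleftrightarrow> (\<forall>A. A \<subseteq> H \<and> absolutely_productive H A \<longrightarrow> finite A)"

definition is_add_subgroup :: "'h::group_add set \<Rightarrow> bool" where
  "is_add_subgroup S \<longleftrightarrow> 0 \<in> S \<and> (\<forall>x\<in>S. \<forall>y\<in>S. x + y \<in> S) \<and> (\<forall>x\<in>S. - x \<in> S)"

definition NSS :: "'h::topological_group_add itself \<Rightarrow> bool" where
  "NSS TYPE('h) \<longleftrightarrow> (\<exists>U::'h set. open U \<and> 0 \<in> U \<and>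
      (\<forall>S. is_add_subgroup S \<and> S \<subseteq> U \<longrightarrow> S = {0}))"

text \<open>C_p(X,G) as a subset of the function space 'a => 'g; the topology on functions
  from Function_Topology is the product topology, i.e. pointwise convergence.\<close>
definition Cp :: "('a::topological_space \<Rightarrow> 'g::topological_space) set" where
  "Cp = {f. continuous_on UNIV f}"

definition G_regular :: "'a::topological_space itself \<Rightarrow> 'g::{group_add,topological_space} itself \<Rightarrow> bool" where
  "G_regular TYPE('a) TYPE('g) \<longleftrightarrow>
     (\<forall>F x. closed (F::'a set) \<and> x \<notin> F \<longrightarrow>
        (\<exists>(f::'a \<Rightarrow> 'g) g. f \<in> Cp \<and> g \<noteq> 0 \<and> f x = g \<and> f ` F \<subseteq> {0}))"

definition has_countable_network :: "'b topology \<Rightarrow> bool" where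
  "has_countable_network T \<longleftrightarrow> (\<exists>\<N>. countable \<N> \<and> (\<forall>N\<in>\<N>. N \<subseteq> topspace T) \<and>
      (\<forall>U x. openin T U \<and> x \<in> U \<longrightarrow> (\<exists>N\<in>\<N>. x \<in> N \<and> N \<subseteq> U)))"

end

theory Submission
  imports Defs
begin

definition pw :: "nat \<Rightarrow> 'h::group_add \<Rightarrow> 'h" where "pw n g = (((+) g) ^^ n) 0"

lemma pw_0[simp]: "pw 0 g = 0" by (simp add: pw_def)
lemma pw_Suc: "pw (Suc n) g = g + pw n g" by (simp add: pw_def)
lemma pw_add: "pw (m+n) g = pw m g + pw n g"
  by (induct m) (simp_all add: pw_Suc add.assoc)
lemma pw_comm: "pw m g + pw n g = pw n g + pw m g"
  by (metis pw_add add.commute)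
lemma pw_one[simp]: "pw 1 g = g" by (simp add: pw_def)
lemma pw_Suc0[simp]: "pw (Suc 0) g = g" by (simp add: pw_def)

lemma zmul_nat: "zmul (int n) g = pw n g"
  by (simp add: zmul_def pw_def)
lemma zmul_neg_nat: "zmul (- int n) g = - pw n g"
  by (cases "n=0") (simp_all add: zmul_def pw_def)

lemma zmul_zero_left[simp]: "zmul 0 g = 0" by (simp add: zmul_def)
lemma pw_zero_right[simp]: "pw n (0::'h::group_add) = 0" by (induct n) (simp_all add: pw_Suc)
lemma zmul_zero_right[simp]: "zmul k (0::'h::group_add) = 0"
  by (simp add: zmul_def pw_def[symmetric])

definition cyc :: "'h::group_add \<Rightarrow> 'h set" where
  "cyc g = {y. \<exists>n. y = pw n g \<or> y = - pw n g}"

lemma cyc_subgroup: "is_add_subgroup (cyc g)"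
  unfolding is_add_subgroup_def
proof (intro conjI ballI)
  show "0 \<in> cyc g" unfolding cyc_def by (rule CollectI, rule exI[of _ 0]) simp
next
  fix x assume "x \<in> cyc g" then show "- x \<in> cyc g" unfolding cyc_def by auto
next
  fix x y assume x: "x \<in> cyc g" and y: "y \<in> cyc g"
  then obtain m n where xm: "x = pw m g \<or> x = - pw m g" and yn: "y = pw n g \<or> y = - pw n g"
    unfolding cyc_def by auto
  have A: "pw m g + - pw n g \<in> cyc g"
  proof (cases "n \<le> m")
    case True
    then have "pw m g = pw (m-n) g + pw n g" by (metis pw_add le_add_diff_inverse2)
    then show ?thesis unfolding cyc_def by (auto simp: add.assoc)
  next
    case False
    then have "pw n g = pw (n-m) g + pw m g" by (metis pw_add le_add_diff_inverse2 nat_le_linear)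
    then have "pw m g + - pw n g = - pw (n-m) g" by (simp only: minus_add add_minus_cancel)
    then show ?thesis unfolding cyc_def by auto
  qed
  have B: "- pw m g + pw n g \<in> cyc g"
  proof (cases "m \<le> n")
    case True
    then have "pw n g = pw m g + pw (n-m) g" by (metis pw_add le_add_diff_inverse)
    then show ?thesis unfolding cyc_def by (auto simp: add.assoc[symmetric])
  next
    case False
    then have "pw m g = pw n g + pw (m-n) g" by (metis pw_add le_add_diff_inverse nat_le_linear)
    then have "- pw m g + pw n g = - pw (m-n) g" by (simp add: minus_add add.assoc)
    then show ?thesis unfolding cyc_def by auto
  qed
  have C: "pw m g + pw n g \<in> cyc g" unfolding cyc_def by (auto simp: pw_add[symmetric])
  have D: "- pw m g + - pw n g \<in> cyc g"
  proof -
    have "- pw m g + - pw n g = - pw (n+m) g" by (simp add: pw_add minus_add)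
    then show ?thesis unfolding cyc_def by auto
  qed
  from xm yn A B C D show "x + y \<in> cyc g" by auto
qed

lemma NSS_witness:
  assumes "NSS TYPE('g)"
  obtains U :: "'g::topological_group_add set" where "open U" "0 \<in> U" "\<And>g. g \<noteq> 0 \<Longrightarrow> \<exists>k. zmul k g \<notin> U"
proof -
  obtain U :: "'g set" where U: "open U" "0 \<in> U" "\<And>S. is_add_subgroup S \<and> S \<subseteq> U \<Longrightarrow> S = {0}"
    using assms unfolding NSS_def by blast
  have "\<exists>k. zmul k g \<notin> U" if "g \<noteq> 0" for g
  proof -
    have "g \<in> cyc g" unfolding cyc_def by (auto intro!: exI[of _ 1])
    then have "\<not> cyc g \<subseteq> U" using U(3)[of "cyc g"] cyc_subgroup that by auto
    then obtain y where "y \<in> cyc g" "y \<notin> U" by auto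
    then obtain n where "y = pw n g \<or> y = - pw n g" unfolding cyc_def by auto
    then show ?thesis using \<open>y \<notin> U\<close> by (metis zmul_nat zmul_neg_nat)
  qed
  then show ?thesis using that U by blast
qed

lemma zmul_pw: "zmul z a = (if 0 \<le> z then pw (nat z) a else - pw (nat (-z)) a)"
  by (simp add: zmul_def pw_def)

lemma pw_fun: "pw n (f::'a \<Rightarrow> 'g::group_add) y = pw n (f y)"
  by (induct n) (simp_all add: pw_Suc)

lemma zmul_fun: "zmul k (f::'a \<Rightarrow> 'g::group_add) y = zmul k (f y)"
  by (simp add: zmul_pw pw_fun)

lemma zmul_fun': "zmul k (f::'a \<Rightarrow> 'g::group_add) = (\<lambda>y. zmul k (f y))"
  by (rule ext) (rule zmul_fun)

lemma opsum_apply: "opsum (a::nat \<Rightarrow> 'a \<Rightarrow> 'g::group_add) z k y = opsum (\<lambda>n. a n y) z k"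
  by (induct k) (simp_all add: zmul_fun)

lemma continuous_on_pw:
  fixes f :: "'a::topological_space \<Rightarrow> 'g::topological_group_add"
  assumes "continuous_on S f" shows "continuous_on S (\<lambda>y. pw n (f y))"
  by (induct n) (simp_all add: pw_Suc continuous_on_add assms)

lemma continuous_on_zmul:
  fixes f :: "'a::topological_space \<Rightarrow> 'g::topological_group_add"
  assumes "continuous_on S f" shows "continuous_on S (\<lambda>y. zmul k (f y))"
  unfolding zmul_pw using continuous_on_pw[OF assms]
  by (cases "0 \<le> k") (simp_all add: continuous_on_minus)

lemma Cp_add: "f \<in> Cp \<Longrightarrow> g \<in> Cp \<Longrightarrow> (f + g :: 'a::topological_space \<Rightarrow> 'g::topological_group_add) \<in> Cp"
  unfolding Cp_def plus_fun_def by (simp add: continuous_on_add)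

lemma Cp_zmul: "f \<in> Cp \<Longrightarrow> zmul k (f :: 'a::topological_space \<Rightarrow> 'g::topological_group_add) \<in> Cp"
  unfolding Cp_def zmul_fun' by (simp add: continuous_on_zmul)

lemma Cp_zero: "(0 :: 'a::topological_space \<Rightarrow> 'g::topological_group_add) \<in> Cp"
  unfolding Cp_def zero_fun_def by simp

lemma opsum_Cp:
  fixes a :: "nat \<Rightarrow> 'a::topological_space \<Rightarrow> 'g::topological_group_add"
  assumes "\<And>n. a n \<in> Cp" shows "opsum a z k \<in> Cp"
proof (induct k)
  case 0 show ?case by (simp only: opsum.simps) (rule Cp_zmul[OF assms])
next
  case (Suc k) show ?case by (simp only: opsum.simps) (rule Cp_add[OF Suc Cp_zmul[OF assms]])
qed

lemma NSS_seq:
  fixes g :: "nat \<Rightarrow> 'g::topological_group_add"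
  assumes U: "open (U::'g set)" "0 \<in> U" "\<And>g. g \<noteq> 0 \<Longrightarrow> \<exists>k. zmul k g \<notin> U"
    and conv: "\<And>z. \<exists>L. (opsum g z \<longlongrightarrow> L) sequentially"
  shows "\<forall>\<^sub>F n in sequentially. g n = 0"
proof -
  define m where "m n = (if g n = 0 then 0 else SOME k. zmul k (g n) \<notin> U)" for n
  have mU: "zmul (m n) (g n) \<notin> U" if "g n \<noteq> 0" for n
  proof -
    have "\<exists>k. zmul k (g n) \<notin> U" using U(3) that by blast
    then have "zmul (SOME k. zmul k (g n) \<notin> U) (g n) \<notin> U" by (rule someI_ex)
    then show ?thesis using that unfolding m_def by simp
  qed
  obtain L where L: "(opsum g m \<longlongrightarrow> L) sequentially" using conv by blast
  have L': "((\<lambda>n. opsum g m (Suc n)) \<longlongrightarrow> L) sequentially"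
    using L by (rule LIMSEQ_Suc)
  have "((\<lambda>n. - opsum g m n + opsum g m (Suc n)) \<longlongrightarrow> - L + L) sequentially"
    by (intro tendsto_add tendsto_minus L L')
  then have "((\<lambda>n. zmul (m (Suc n)) (g (Suc n))) \<longlongrightarrow> 0) sequentially"
    by (simp add: add.assoc[symmetric])
  then have "\<forall>\<^sub>F n in sequentially. zmul (m (Suc n)) (g (Suc n)) \<in> U"
    using U(1,2) by (rule topological_tendstoD)
  then have "\<forall>\<^sub>F n in sequentially. g (Suc n) = 0"
    by (rule eventually_mono) (use mU in blast)
  then show ?thesis using eventually_sequentially_Suc[of "\<lambda>n. g n = 0"] by blast
qed

lemma tendsto_fun_iff:
  fixes f :: "'b \<Rightarrow> 'a \<Rightarrow> 'g::topological_space"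
  shows "(f \<longlongrightarrow> l) F \<longleftrightarrow> (\<forall>y. ((\<lambda>n. f n y) \<longlongrightarrow> l y) F)"
proof -
  have "(f \<longlongrightarrow> l) F \<longleftrightarrow> limitin (product_topology (\<lambda>_. euclidean) UNIV) f l F"
    by (simp add: euclidean_product_topology)
  also have "\<dots> \<longleftrightarrow> (\<forall>y. ((\<lambda>n. f n y) \<longlongrightarrow> l y) F)"
    by (simp add: limitin_componentwise)
  finally show ?thesis .
qed

lemma limitin_Cp_iff:
  fixes f :: "'b \<Rightarrow> 'a::topological_space \<Rightarrow> 'g::topological_group_add"
  shows "limitin (subtopology euclidean Cp) f l F \<longleftrightarrow>
     l \<in> Cp \<and> (\<forall>\<^sub>F n in F. f n \<in> Cp) \<and> (\<forall>y. ((\<lambda>n. f n y) \<longlongrightarrow> l y) F)"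
  by (simp add: limitin_subtopology tendsto_fun_iff)

lemma opsum_const:
  fixes a :: "nat \<Rightarrow> 'h::group_add"
  assumes "\<And>j. n < j \<Longrightarrow> j \<le> n' \<Longrightarrow> zmul (z j) (a j) = 0" "n \<le> n'"
  shows "opsum a z n' = opsum a z n"
  using assms
proof (induct n')
  case 0 then show ?case by simp
next
  case (Suc n')
  show ?case
  proof (cases "n = Suc n'")
    case True then show ?thesis by simp
  next
    case False
    then have "n \<le> n'" using Suc.prems by simp
    then have "opsum a z n' = opsum a z n" using Suc by simp
    moreover have "zmul (z (Suc n')) (a (Suc n')) = 0" using Suc.prems \<open>n \<le> n'\<close> by simp
    ultimately show ?thesis by simp
  qed
qed

lemma opsum_zero:
  fixes a :: "nat \<Rightarrow> 'h::group_add"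
  assumes "\<And>j. j \<le> n \<Longrightarrow> zmul (z j) (a j) = 0"
  shows "opsum a z n = 0"
  using assms by (induct n) simp_all

lemma group_nbhd:
  fixes U :: "'g::topological_group_add set"
  assumes "open U" "0 \<in> U"
  obtains V where "open V" "0 \<in> V" "\<And>v w. v \<in> V \<Longrightarrow> w \<in> V \<Longrightarrow> - v + w \<in> U"
proof -
  have c: "continuous_on UNIV (\<lambda>p::'g\<times>'g. - fst p + snd p)"
    by (intro continuous_intros)
  have "open ((\<lambda>p::'g\<times>'g. - fst p + snd p) -` U)"
    using c assms(1) continuous_on_open_vimage[of UNIV] by auto
  moreover have "(0,0) \<in> (\<lambda>p::'g\<times>'g. - fst p + snd p) -` U" using assms(2) by simp
  ultimately obtain A B where AB: "open A" "open B" "(0,0) \<in> A \<times> B"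
      "A \<times> B \<subseteq> (\<lambda>p::'g\<times>'g. - fst p + snd p) -` U"
    by (rule open_prod_elim)
  show ?thesis
  proof (rule that[of "A \<inter> B"])
    show "open (A \<inter> B)" using AB by auto
    show "0 \<in> A \<inter> B" using AB by auto
    fix v w assume "v \<in> A \<inter> B" "w \<in> A \<inter> B"
    then have "(v,w) \<in> A \<times> B" by auto
    then show "- v + w \<in> U" using AB(4) by auto
  qed
qed

lemma TAP_Cp:
  assumes nss: "NSS TYPE('g::{topological_group_add,t2_space})"
    and seqc: "\<And>x::nat \<Rightarrow> 'a::topological_space. \<exists>l r. strict_mono r \<and> ((x \<circ> r) \<longlongrightarrow> l) sequentially"
  shows "TAP (Cp :: ('a \<Rightarrow> 'g) set)"
  unfolding TAP_def
proof (intro allI impI, elim conjE, rule ccontr)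
  fix A :: "('a \<Rightarrow> 'g) set"
  assume ACp: "A \<subseteq> Cp" and ap: "absolutely_productive Cp A" and inf: "infinite A"
  obtain U :: "'g set" where U: "open U" "0 \<in> U" "\<And>g. g \<noteq> 0 \<Longrightarrow> \<exists>k. zmul k g \<notin> U"
    using NSS_witness[OF nss] by blast
  obtain V :: "'g set" where V: "open V" "0 \<in> V" "\<And>v w. v \<in> V \<Longrightarrow> w \<in> V \<Longrightarrow> - v + w \<in> U"
    using group_nbhd[OF U(1,2)] by blast
  obtain a :: "nat \<Rightarrow> 'a \<Rightarrow> 'g" where a: "inj a" "range a \<subseteq> A"
    using infinite_countable_subset[OF inf] by blast
  have aCp: "a n \<in> Cp" for n using a ACp by auto
  have conv: "\<exists>L. L \<in> Cp \<and> (\<forall>y. ((\<lambda>k. opsum a z k y) \<longlongrightarrow> L y) sequentially)" for z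
  proof -
    obtain L where "limitin (subtopology euclidean Cp) (opsum a z) L sequentially"
      using ap a unfolding absolutely_productive_def by blast
    then show ?thesis by (auto simp: limitin_Cp_iff)
  qed
  have evz: "\<forall>\<^sub>F n in sequentially. a n y = 0" for y
  proof (rule NSS_seq[OF U])
    fix z
    obtain L where "\<forall>y. ((\<lambda>k. opsum a z k y) \<longlongrightarrow> L y) sequentially" using conv by blast
    then show "\<exists>L. (opsum (\<lambda>n. a n y) z \<longlongrightarrow> L) sequentially"
      by (auto simp: opsum_apply)
  qed
  have evnz: "\<forall>\<^sub>F n in sequentially. a n \<noteq> 0"
  proof (cases "\<exists>n0. a n0 = 0")
    case True
    then obtain n0 where "a n0 = 0" by blast
    then have "\<forall>n\<ge>Suc n0. a n \<noteq> 0" using a(1) by (metis inj_eq not_less_eq_eq order_refl)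
    then show ?thesis unfolding eventually_sequentially by blast
  next
    case False then show ?thesis by simp
  qed
  define x where "x n = (SOME y. a n y \<noteq> 0)" for n
  define m where "m n = (SOME k. zmul k (a n (x n)) \<notin> U)" for n
  define h where "h n = zmul (m n) (a n)" for n
  have hx: "h n (x n) \<notin> U" if "a n \<noteq> 0" for n
  proof -
    have "\<exists>y. a n y \<noteq> 0" using that by auto
    then have "a n (x n) \<noteq> 0" unfolding x_def by (rule someI_ex)
    then have "\<exists>k. zmul k (a n (x n)) \<notin> U" using U(3) by blast
    then have "zmul (m n) (a n (x n)) \<notin> U" unfolding m_def by (rule someI_ex)
    then show ?thesis unfolding h_def by (simp add: zmul_fun)
  qed
  have hCp: "h n \<in> Cp" for n unfolding h_def by (rule Cp_zmul[OF aCp])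
  obtain xs \<phi> where \<phi>: "strict_mono \<phi>" "((x \<circ> \<phi>) \<longlongrightarrow> xs) sequentially"
    using seqc by blast
  have \<phi>lim: "filterlim \<phi> sequentially sequentially" using \<phi>(1) by (rule filterlim_subseq)
  obtain Ns where Ns: "\<And>n. n \<ge> Ns \<Longrightarrow> a n xs = 0"
    using evz[of xs] unfolding eventually_sequentially by blast
  define P where "P i Q i' \<longleftrightarrow> i < i' \<and> a (\<phi> i') \<noteq> 0 \<and> (\<forall>n\<ge>\<phi> i'. a n (x (\<phi> i)) = 0)
      \<and> Q (x (\<phi> i')) \<in> V" for i and Q :: "'a \<Rightarrow> 'g" and i'
  define Inv where "Inv i Q \<longleftrightarrow> a (\<phi> i) \<noteq> 0 \<and> Q \<in> Cp \<and> Q xs = 0 \<and> \<phi> i \<ge> Ns"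
    for i and Q :: "'a \<Rightarrow> 'g"
  have exP: "\<exists>i'. P i Q i'" if "Inv i Q" for i Q
  proof -
    have e1: "\<forall>\<^sub>F i' in sequentially. i < i'" by (rule eventually_gt_at_top)
    have e2: "\<forall>\<^sub>F i' in sequentially. a (\<phi> i') \<noteq> 0"
      using filterlim_iff[THEN iffD1, OF \<phi>lim] evnz by blast
    obtain M where M: "\<And>n. n \<ge> M \<Longrightarrow> a n (x (\<phi> i)) = 0"
      using evz[of "x (\<phi> i)"] unfolding eventually_sequentially by blast
    have e3: "\<forall>\<^sub>F i' in sequentially. \<forall>n\<ge>\<phi> i'. a n (x (\<phi> i)) = 0"
    proof -
      have "\<forall>\<^sub>F i' in sequentially. \<phi> i' \<ge> M"
        using filterlim_iff[THEN iffD1, OF \<phi>lim] eventually_ge_at_top by blast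
      then show ?thesis by (rule eventually_mono) (use M in auto)
    qed
    have QC: "continuous_on UNIV Q" using that unfolding Inv_def Cp_def by blast
    have "((\<lambda>i'. Q ((x \<circ> \<phi>) i')) \<longlongrightarrow> Q xs) sequentially"
      by (rule continuous_on_tendsto_compose[OF QC \<phi>(2)]) auto
    then have e4: "\<forall>\<^sub>F i' in sequentially. Q (x (\<phi> i')) \<in> V"
      using that V(1,2) unfolding Inv_def by (auto dest: topological_tendstoD)
    have "\<forall>\<^sub>F i' in sequentially. P i Q i'"
      unfolding P_def using e1 e2 e3 e4 by (intro eventually_conj)
    then obtain N where "\<And>n. n \<ge> N \<Longrightarrow> P i Q n" unfolding eventually_sequentially by blast
    then show ?thesis by blast
  qed
  have InvP: "Inv i' (Q + h (\<phi> i'))" if "Inv i Q" "P i Q i'" for i Q i'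
  proof -
    have "\<phi> i < \<phi> i'" using that(2) \<phi>(1) unfolding P_def by (simp add: strict_mono_less)
    then have z: "a (\<phi> i') xs = 0" "Ns \<le> \<phi> i'" using that(1) Ns unfolding Inv_def by simp_all
    have "(Q + h (\<phi> i')) xs = Q xs + h (\<phi> i') xs" by simp
    also have "\<dots> = 0" using that(1) z unfolding Inv_def h_def by (simp add: zmul_fun)
    finally have "(Q + h (\<phi> i')) xs = 0" .
    moreover have "Q + h (\<phi> i') \<in> Cp" using that(1) hCp unfolding Inv_def by (blast intro: Cp_add)
    moreover have "a (\<phi> i') \<noteq> 0" using that(2) unfolding P_def by blast
    ultimately show ?thesis using z unfolding Inv_def by blast
  qed
  obtain i0 where i0: "\<phi> i0 \<ge> Ns" "a (\<phi> i0) \<noteq> 0"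
  proof -
    have "\<forall>\<^sub>F i in sequentially. \<phi> i \<ge> Ns"
      using filterlim_iff[THEN iffD1, OF \<phi>lim] eventually_ge_at_top by blast
    moreover have "\<forall>\<^sub>F i in sequentially. a (\<phi> i) \<noteq> 0"
      using filterlim_iff[THEN iffD1, OF \<phi>lim] evnz by blast
    ultimately have "\<forall>\<^sub>F i in sequentially. \<phi> i \<ge> Ns \<and> a (\<phi> i) \<noteq> 0"
      by (rule eventually_conj)
    then obtain N where "\<And>n. n \<ge> N \<Longrightarrow> \<phi> n \<ge> Ns \<and> a (\<phi> n) \<noteq> 0"
      unfolding eventually_sequentially by blast
    then show ?thesis using that by blast
  qed
  define step where "step s = (let i' = (SOME i'. P (fst s) (snd s) i') in (i', snd s + h (\<phi> i')))"
    for s :: "nat \<times> ('a \<Rightarrow> 'g)"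
  define st where "st = rec_nat (i0, h (\<phi> i0)) (\<lambda>_ s. step s)"
  have st0: "st 0 = (i0, h (\<phi> i0))" unfolding st_def by simp
  have stS: "st (Suc k) = step (st k)" for k unfolding st_def by simp
  have inv: "Inv (fst (st k)) (snd (st k))" for k
  proof (induct k)
    case 0
    have "h (\<phi> i0) xs = 0" using i0 Ns by (simp add: h_def zmul_fun)
    then show ?case using st0 i0 hCp unfolding Inv_def by simp
  next
    case (Suc k)
    define i' where "i' = (SOME i'. P (fst (st k)) (snd (st k)) i')"
    have "P (fst (st k)) (snd (st k)) i'" unfolding i'_def by (rule someI_ex[OF exP[OF Suc]])
    moreover have "st (Suc k) = (i', snd (st k) + h (\<phi> i'))"
      unfolding stS step_def i'_def Let_def by simp
    ultimately show ?case using InvP[OF Suc] by (metis fst_conv snd_conv)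
  qed
  have Pst: "P (fst (st k)) (snd (st k)) (fst (st (Suc k)))"
    and stS': "snd (st (Suc k)) = snd (st k) + h (\<phi> (fst (st (Suc k))))" for k
  proof -
    define i' where "i' = (SOME i'. P (fst (st k)) (snd (st k)) i')"
    have "P (fst (st k)) (snd (st k)) i'" unfolding i'_def by (rule someI_ex[OF exP[OF inv]])
    moreover have "st (Suc k) = (i', snd (st k) + h (\<phi> i'))"
      unfolding stS step_def i'_def Let_def by simp
    ultimately show "P (fst (st k)) (snd (st k)) (fst (st (Suc k)))"
      "snd (st (Suc k)) = snd (st k) + h (\<phi> (fst (st (Suc k))))" by simp_all
  qed
  define r where "r k = \<phi> (fst (st k))" for k
  define Q where "Q k = snd (st k)" for k
  have smi: "strict_mono (\<lambda>k. fst (st k))"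
    unfolding strict_mono_Suc_iff using Pst unfolding P_def by blast
  have r: "strict_mono r" unfolding r_def using smi \<phi>(1)
    by (simp add: strict_mono_def)
  have rnz: "a (r k) \<noteq> 0" for k using inv[of k] unfolding r_def Inv_def by simp
  have rNs: "r k \<ge> Ns" for k using inv[of k] unfolding r_def Inv_def by simp
  have Q0: "Q 0 = h (r 0)" unfolding Q_def r_def st0 by simp
  have QS: "Q (Suc k) = Q k + h (r (Suc k))" for k unfolding Q_def r_def by (rule stS')
  have F3: "\<And>n. n \<ge> r (Suc k) \<Longrightarrow> a n (x (r k)) = 0" for k
    using Pst[of k] unfolding P_def r_def by blast
  have F4: "Q k (x (r (Suc k))) \<in> V" for k
    using Pst[of k] unfolding P_def r_def Q_def by blast
  have F6: "((x \<circ> r) \<longlongrightarrow> xs) sequentially"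
  proof -
    have "((x \<circ> \<phi>) \<circ> (\<lambda>k. fst (st k))) \<longlonglongrightarrow> xs" by (rule LIMSEQ_subseq_LIMSEQ[OF \<phi>(2) smi])
    then show ?thesis unfolding r_def comp_def .
  qed
  define z where "z n = (if n \<in> range r then m n else 0)" for n
  have notr: "j \<notin> range r" if "r k < j" "j < r (Suc k)" for j k
  proof
    assume "j \<in> range r"
    then obtain i where "j = r i" by auto
    then have "k < i" "i < Suc k" using that r by (simp_all add: strict_mono_less)
    then show False by simp
  qed
  have notr0: "j \<notin> range r" if "j < r 0" for j
  proof
    assume "j \<in> range r"
    then obtain i where "j = r i" by auto
    then show False using that r by (simp add: strict_mono_less)
  qed
  have zr: "zmul (z (r k)) (a (r k)) = h (r k)" for k unfolding z_def h_def by simp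
  have G1: "opsum a z (r k) = Q k" for k
  proof (induct k)
    case 0
    show ?case
    proof (cases "r 0")
      case 0 then show ?thesis using zr[of 0] Q0 by simp
    next
      case (Suc p)
      have "opsum a z p = 0"
        by (rule opsum_zero) (use notr0 Suc in \<open>auto simp: z_def\<close>)
      then show ?thesis using Suc zr[of 0] Q0 by simp
    qed
  next
    case (Suc k)
    have "r k < r (Suc k)" using r by (simp add: strict_mono_less)
    define p where "p = r (Suc k) - 1"
    have p: "r (Suc k) = Suc p" "r k \<le> p" using \<open>r k < r (Suc k)\<close> unfolding p_def by simp_all
    have "opsum a z p = opsum a z (r k)"
      by (rule opsum_const) (use notr p in \<open>auto simp: z_def\<close>)
    then show ?case using p Suc zr[of "Suc k"] QS[of k] by simp
  qed
  obtain L where L: "L \<in> Cp" "\<And>y. ((\<lambda>k. opsum a z k y) \<longlongrightarrow> L y) sequentially"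
    using conv by blast
  have G2: "L xs = 0"
  proof -
    have "opsum a z k xs = 0" for k
      unfolding opsum_apply
    proof (rule opsum_zero)
      fix j assume "j \<le> k"
      show "zmul (z j) (a j xs) = 0"
      proof (cases "j < Ns")
        case True
        then have "j < r 0" using rNs[of 0] by simp
        then show ?thesis using notr0 unfolding z_def by simp
      next
        case False then show ?thesis using Ns by simp
      qed
    qed
    then have "((\<lambda>k. opsum a z k xs) \<longlongrightarrow> 0) sequentially" by simp
    then show ?thesis by (rule LIMSEQ_unique[OF L(2)[of xs]])
  qed
  have G3: "L (x (r (Suc k))) = Q k (x (r (Suc k))) + h (r (Suc k)) (x (r (Suc k)))" for k
  proof -
    define y where "y = x (r (Suc k))"
    have ev: "opsum a z n y = opsum a z (r (Suc k)) y" if "n \<ge> r (Suc k)" for n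
      unfolding opsum_apply
    proof (rule opsum_const[OF _ that])
      fix j assume j: "r (Suc k) < j" "j \<le> n"
      show "zmul (z j) (a j y) = 0"
      proof (cases "j \<in> range r")
        case True
        then obtain i where i: "j = r i" by auto
        then have "Suc k < i" using j r by (simp add: strict_mono_less)
        then have "r (Suc (Suc k)) \<le> r i" using r by (simp add: strict_mono_less_eq)
        then have "a j y = 0" using F3[of "Suc k" j] i unfolding y_def by simp
        then show ?thesis by simp
      next
        case False then show ?thesis unfolding z_def by simp
      qed
    qed
    have "((\<lambda>n. opsum a z n y) \<longlongrightarrow> opsum a z (r (Suc k)) y) sequentially"
      by (rule tendsto_eventually) (unfold eventually_sequentially, use ev in blast)
    then have "L y = opsum a z (r (Suc k)) y" by (rule LIMSEQ_unique[OF L(2)[of y]])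
    also have "\<dots> = (Q k + h (r (Suc k))) y" using G1[of "Suc k"] QS[of k] by (simp only:)
    also have "\<dots> = Q k y + h (r (Suc k)) y" by (simp only: plus_fun_apply)
    finally show ?thesis by (simp only: y_def)
  qed
  have LC: "continuous_on UNIV L" using L(1) unfolding Cp_def by simp
  have "((\<lambda>k. L ((x \<circ> r) k)) \<longlongrightarrow> L xs) sequentially"
    by (rule continuous_on_tendsto_compose[OF LC F6]) auto
  then have "\<forall>\<^sub>F k in sequentially. L (x (r k)) \<in> V"
    using V(1,2) G2 by (auto dest: topological_tendstoD)
  then obtain N where N: "\<And>n. n \<ge> N \<Longrightarrow> L (x (r n)) \<in> V"
    unfolding eventually_sequentially by blast
  define k where "k = N"
  have k: "L (x (r (Suc k))) \<in> V" using N[of "Suc N"] unfolding k_def by simp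
  have "- Q k (x (r (Suc k))) + L (x (r (Suc k))) \<in> U" using V(3)[OF F4 k] .
  also have "- Q k (x (r (Suc k))) + L (x (r (Suc k))) = h (r (Suc k)) (x (r (Suc k)))"
    unfolding G3[of k] by (simp only: add.assoc[symmetric] left_minus add_0_left)
  finally have "h (r (Suc k)) (x (r (Suc k))) \<in> U" .
  then show False using hx rnz by blast
qed

lemma (in Metric_space) second_countable_dense:
  assumes "countable C" "C \<subseteq> M" "\<And>x e. x \<in> M \<Longrightarrow> e > 0 \<Longrightarrow> \<exists>c\<in>C. d c x < e"
  shows "second_countable mtopology"
  unfolding second_countable_def
proof (intro exI conjI ballI allI impI)
  define \<B> where "\<B> = (\<lambda>(c,n::nat). mball c (1 / Suc n)) ` (C \<times> UNIV)"
  show "countable \<B>" unfolding \<B>_def using assms(1) by auto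
  show "openin mtopology V" if "V \<in> \<B>" for V using that unfolding \<B>_def by auto
  fix U x assume Ux: "openin mtopology U \<and> x \<in> U"
  then obtain r where r: "r > 0" "mball x r \<subseteq> U" "x \<in> M"
    unfolding openin_mtopology by blast
  obtain n :: nat where n: "1 / Suc n < r / 2"
    using r(1) by (metis half_gt_zero nat_approx_posE)
  have "1 / real (Suc n) > 0" by simp
  then obtain c where c: "c \<in> C" "d c x < 1 / Suc n" using assms(3)[OF r(3)] by blast
  have cM: "c \<in> M" using c assms(2) by auto
  show "\<exists>V\<in>\<B>. x \<in> V \<and> V \<subseteq> U"
  proof (intro bexI conjI)
    show "mball c (1 / Suc n) \<in> \<B>" unfolding \<B>_def using c by auto
    show "x \<in> mball c (1 / Suc n)" using c cM r by simp
    show "mball c (1 / Suc n) \<subseteq> U"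
    proof
      fix y assume y: "y \<in> mball c (1 / Suc n)"
      then have "d x y \<le> d x c + d c y" using cM r(3) triangle by auto
      also have "\<dots> < r" using c y n by (simp add: commute)
      finally have "y \<in> mball x r" using y r(3) by simp
      then show "y \<in> U" using r(2) by auto
    qed
  qed
qed

lemma separable_metrizable_imp_second_countable:
  assumes "metrizable_space X" "separable_space X"
  shows "second_countable X"
proof -
  obtain M d where Md: "Metric_space M d" "X = Metric_space.mtopology M d"
    using assms(1) unfolding metrizable_space_def by blast
  interpret Metric_space M d by (rule Md(1))
  obtain C where C: "countable C" "C \<subseteq> M" "mtopology closure_of C = M"
    using assms(2) unfolding separable_space_def Md(2) by auto
  have "\<exists>c\<in>C. d c x < e" if xM: "x \<in> M" and e: "e > 0" for x e
  proof -
    have "x \<in> mtopology closure_of C" using C(3) xM by simp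
    then obtain y where "y \<in> C" "y \<in> mball x e" using e unfolding metric_closure_of by blast
    then show ?thesis by (auto simp: commute)
  qed
  then show ?thesis unfolding Md(2) by (rule second_countable_dense[OF C(1,2)])
qed

lemma compact_metrizable_imp_second_countable:
  assumes "metrizable_space X" "compact_space X"
  shows "second_countable X"
proof -
  obtain M d where Md: "Metric_space M d" "X = Metric_space.mtopology M d"
    using assms(1) unfolding metrizable_space_def by blast
  interpret Metric_space M d by (rule Md(1))
  have tb: "mtotally_bounded M"
    using assms(2) unfolding Md(2) compact_space_def by (simp add: compactin_imp_mtotally_bounded)
  have "\<exists>K. finite K \<and> K \<subseteq> M \<and> M \<subseteq> (\<Union>x\<in>K. mball x (1 / Suc n))" for n :: nat
    using tb unfolding mtotally_bounded_def by simp
  then obtain K where K: "\<And>n. finite (K n) \<and> K n \<subseteq> M \<and> M \<subseteq> (\<Union>x\<in>K n. mball x (1 / Suc n))"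
    by metis
  have "countable (\<Union>n. K n)" using K by (simp add: countable_finite)
  moreover have "(\<Union>n. K n) \<subseteq> M" using K by auto
  moreover have "\<exists>c\<in>(\<Union>n. K n). d c x < e" if xM: "x \<in> M" and e: "e > 0" for x e
  proof -
    obtain n :: nat where n: "1 / Suc n < e" using e by (metis nat_approx_posE)
    obtain c where "c \<in> K n" "x \<in> mball c (1 / Suc n)" using K[of n] xM by blast
    then show ?thesis using n by force
  qed
  ultimately show ?thesis unfolding Md(2) by (rule second_countable_dense)
qed

lemma compact_metrizable_seq:
  assumes "metrizable_space (euclidean :: 'a::topological_space topology)" "compact_space (euclidean :: 'a topology)"
  shows "\<exists>l r. strict_mono r \<and> (((x::nat \<Rightarrow> 'a) \<circ> r) \<longlongrightarrow> l) sequentially"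
proof -
  obtain M d where Md: "Metric_space M d" "(euclidean :: 'a topology) = Metric_space.mtopology M d"
    using assms(1) unfolding metrizable_space_def by blast
  interpret Metric_space M d by (rule Md(1))
  have MU: "M = UNIV" using Md(2) topspace_mtopology by (metis topspace_euclidean)
  have "compact_space mtopology" using assms(2) Md(2) by simp
  then obtain l r where "strict_mono r" "limitin mtopology (x \<circ> r) l sequentially"
    unfolding compact_space_sequentially using MU by blast
  then show ?thesis using Md(2) by (metis limitin_canonical_iff)
qed

lemma Cp_network:
  assumes "second_countable (euclidean :: 'a::topological_space topology)"
    and "second_countable (euclidean :: 'g::topological_group_add topology)"
  shows "has_countable_network (subtopology euclidean (Cp :: ('a \<Rightarrow> 'g) set))"
proof -
  obtain BX :: "'a set set" where BX: "countable BX" "\<And>V. V \<in> BX \<Longrightarrow> open V"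
     "\<And>U x. open U \<Longrightarrow> x \<in> U \<Longrightarrow> \<exists>V\<in>BX. x \<in> V \<and> V \<subseteq> U"
    using assms(1) unfolding second_countable_def by auto
  obtain BG :: "'g set set" where BG: "countable BG" "\<And>V. V \<in> BG \<Longrightarrow> open V"
     "\<And>U x. open U \<Longrightarrow> x \<in> U \<Longrightarrow> \<exists>V\<in>BG. x \<in> V \<and> V \<subseteq> U"
    using assms(2) unfolding second_countable_def by auto
  define N where "N S = {f \<in> (Cp :: ('a \<Rightarrow> 'g) set). \<forall>(B,V)\<in>S. f ` B \<subseteq> V}" for S
  define \<N> where "\<N> = N ` {S. finite S \<and> S \<subseteq> BX \<times> BG}"
  show ?thesis unfolding has_countable_network_def
  proof (intro exI conjI ballI allI impI)
    show "countable \<N>" unfolding \<N>_def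
      by (intro countable_image countable_Collect_finite_subset countable_SIGMA BX(1) BG(1))
    show "A \<subseteq> topspace (subtopology euclidean Cp)" if "A \<in> \<N>" for A
      using that unfolding \<N>_def N_def by auto
    fix U and f :: "'a \<Rightarrow> 'g" assume Uf: "openin (subtopology euclidean Cp) U \<and> f \<in> U"
    then obtain T where T: "open T" "U = T \<inter> Cp" by (auto simp: openin_subtopology)
    have fT: "f \<in> T" and fCp: "f \<in> Cp" using Uf T by auto
    then obtain V where V: "finite {i. V i \<noteq> UNIV}" "\<And>i. open (V i)" "f \<in> Pi\<^sub>E UNIV V"
       "Pi\<^sub>E UNIV V \<subseteq> T"
      using T(1) unfolding open_fun_def openin_product_topology_alt by fastforce
    define I where "I = {i. V i \<noteq> UNIV}"
    have fc: "continuous_on UNIV f" using fCp unfolding Cp_def by simp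
    have "\<exists>B W. B \<in> BX \<and> W \<in> BG \<and> i \<in> B \<and> f i \<in> W \<and> W \<subseteq> V i \<and> f ` B \<subseteq> W" for i
    proof -
      obtain W where W: "W \<in> BG" "f i \<in> W" "W \<subseteq> V i" using BG(3)[OF V(2)] V(3) by blast
      have "open (f -` W)" using fc BG(2)[OF W(1)] by (simp add: open_vimage)
      then obtain B where "B \<in> BX" "i \<in> B" "B \<subseteq> f -` W" using BX(3) W(2) by blast
      then show ?thesis using W by blast
    qed
    then obtain B W where BW: "\<And>i. B i \<in> BX \<and> W i \<in> BG \<and> i \<in> B i \<and> f i \<in> W i \<and> W i \<subseteq> V i \<and> f ` B i \<subseteq> W i"
      by metis
    define S where "S = (\<lambda>i. (B i, W i)) ` I"
    show "\<exists>A\<in>\<N>. f \<in> A \<and> A \<subseteq> U"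
    proof (intro bexI conjI)
      show "N S \<in> \<N>" unfolding \<N>_def S_def using V(1) BW unfolding I_def by auto
      show "f \<in> N S" unfolding N_def S_def using fCp BW by auto
      show "N S \<subseteq> U"
      proof
        fix g assume g: "g \<in> N S"
        have "g \<in> Pi\<^sub>E UNIV V"
        proof (simp add: PiE_def Pi_def, intro allI)
          fix i show "g i \<in> V i"
          proof (cases "i \<in> I")
            case True
            then have "g ` B i \<subseteq> W i" using g unfolding N_def S_def by auto
            then show ?thesis using BW[of i] by auto
          next
            case False then show ?thesis unfolding I_def by auto
          qed
        qed
        then show "g \<in> U" using g V(4) T(2) unfolding N_def by auto
      qed
    qed
  qed
qed

lemma open_eval: "open (B::'g::topological_space set) \<Longrightarrow> open {h::'a \<Rightarrow> 'g. h x \<in> B}"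
proof -
  assume "open B"
  then have "open ((\<lambda>h::'a \<Rightarrow> 'g. h x) -` B)"
    by (intro open_vimage continuous_on_product_coordinates)
  then show ?thesis by (simp add: vimage_def)
qed

lemma G_regularD:
  assumes "G_regular TYPE('a::topological_space) TYPE('g::{group_add,topological_space})"
    "closed F" "x \<notin> F"
  shows "\<exists>(f::'a \<Rightarrow> 'g) g. f \<in> Cp \<and> g \<noteq> 0 \<and> f x = g \<and> f ` F \<subseteq> {0}"
  using assms unfolding G_regular_def by blast

lemma networkD:
  assumes "has_countable_network T"
  shows "\<exists>\<N>. countable \<N> \<and> (\<forall>U x. openin T U \<and> x \<in> U \<longrightarrow> (\<exists>N\<in>\<N>. x \<in> N \<and> N \<subseteq> U))"
proof -
  obtain \<N> where "countable \<N>" "(\<forall>U x. openin T U \<and> x \<in> U \<longrightarrow> (\<exists>N\<in>\<N>. x \<in> N \<and> N \<subseteq> U))"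
    using assms unfolding has_countable_network_def by (elim exE conjE)
  then show ?thesis by (intro exI conjI)
qed

lemma X_network:
  assumes greg: "G_regular TYPE('a::topological_space) TYPE('g::{topological_group_add,t2_space})"
    and scG: "second_countable (euclidean :: 'g topology)"
    and net: "has_countable_network (subtopology euclidean (Cp :: ('a \<Rightarrow> 'g) set))"
  shows "has_countable_network (euclidean :: 'a topology)"
proof -
  obtain BG :: "'g set set" where BG: "countable BG" "\<And>V. V \<in> BG \<Longrightarrow> open V"
     "\<And>U x. open U \<Longrightarrow> x \<in> U \<Longrightarrow> \<exists>V\<in>BG. x \<in> V \<and> V \<subseteq> U"
    using scG unfolding second_countable_def by auto
  obtain \<N> :: "('a \<Rightarrow> 'g) set set" where N0: "countable \<N>"
    "\<forall>U f. openin (subtopology euclidean Cp) U \<and> f \<in> U \<longrightarrow> (\<exists>N\<in>\<N>. f \<in> N \<and> N \<subseteq> U)"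
    using networkD[OF net] by (elim exE conjE) (rule that)
  have N: "countable \<N>" "\<And>U f. openin (subtopology euclidean Cp) U \<Longrightarrow> f \<in> U \<Longrightarrow> \<exists>N\<in>\<N>. f \<in> N \<and> N \<subseteq> U"
    using N0 by auto
  define M where "M N B = {x. \<forall>f\<in>N. f x \<in> B}" for N :: "('a \<Rightarrow> 'g) set" and B
  show ?thesis unfolding has_countable_network_def
  proof (intro exI[of _ "(\<lambda>(N,B). M N B) ` (\<N> \<times> BG)"] conjI ballI allI impI)
    show "countable ((\<lambda>(N,B). M N B) ` (\<N> \<times> BG))" by (intro countable_image countable_SIGMA N(1) BG(1))
    show "A \<subseteq> topspace euclidean" for A by simp
    fix U and x :: 'a assume Ux: "openin euclidean U \<and> x \<in> U"
    have "closed (- U)" using Ux by auto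
    moreover have "x \<notin> - U" using Ux by auto
    ultimately have "\<exists>(f::'a \<Rightarrow> 'g) g. f \<in> Cp \<and> g \<noteq> 0 \<and> f x = g \<and> f ` (- U) \<subseteq> {0}"
      by (rule G_regularD[OF greg])
    then obtain f :: "'a \<Rightarrow> 'g" and g where f: "f \<in> Cp" "g \<noteq> 0" "f x = g" "f ` (- U) \<subseteq> {0}"
      by blast
    obtain Og where Og: "open Og" "g \<in> Og" "0 \<notin> Og" using f(2) separation_t1 by blast
    obtain B where B: "B \<in> BG" "g \<in> B" "B \<subseteq> Og" using BG(3)[OF Og(1,2)] by blast
    have "openin (subtopology euclidean Cp) ({h. h x \<in> B} \<inter> Cp)"
      unfolding openin_subtopology by (rule exI[of _ "{h. h x \<in> B}"]) (simp add: open_eval[OF BG(2)[OF B(1)]])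
    moreover have "f \<in> {h. h x \<in> B} \<inter> Cp" using f B by auto
    ultimately obtain N where NN: "N \<in> \<N>" "f \<in> N" "N \<subseteq> {h. h x \<in> B} \<inter> Cp" using N(2) by blast
    show "\<exists>A\<in>(\<lambda>(N,B). M N B) ` (\<N> \<times> BG). x \<in> A \<and> A \<subseteq> U"
    proof (intro bexI conjI)
      show "M N B \<in> (\<lambda>(N,B). M N B) ` (\<N> \<times> BG)" using NN B by auto
      show "x \<in> M N B" using NN unfolding M_def by auto
      show "M N B \<subseteq> U"
      proof
        fix y assume "y \<in> M N B"
        then have "f y \<in> B" using NN unfolding M_def by auto
        then have "f y \<noteq> 0" using B Og by auto
        then show "y \<in> U" using f(4) by auto
      qed
    qed
  qed
qed

lemma regular_nbhd:
  assumes reg: "regular_space (euclidean :: 'a::topological_space topology)"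
    and "open Op" "(y::'a) \<in> Op"
  shows "\<exists>W. open W \<and> y \<in> W \<and> closure W \<subseteq> Op"
proof -
  have "closedin euclidean (- Op)" using assms(2) by auto
  moreover have "y \<in> topspace euclidean - (- Op)" using assms(3) by auto
  moreover have "\<forall>C a. closedin (euclidean::'a topology) C \<and> a \<in> topspace euclidean - C
              \<longrightarrow> (\<exists>U. openin euclidean U \<and> a \<in> U \<and> disjnt C (euclidean closure_of U))"
    using reg by (simp only: regular_space)
  ultimately have "\<exists>U. openin euclidean U \<and> y \<in> U \<and> disjnt (- Op) (euclidean closure_of U)"
    by simp
  then obtain W where "openin euclidean W" "y \<in> W" "disjnt (- Op) (euclidean closure_of W)"
    by (elim exE conjE)
  then show ?thesis by (auto simp: disjnt_def)
qed

lemma compact_from_TAP: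
  assumes reg: "regular_space (euclidean :: 'a::topological_space topology)"
    and netX: "has_countable_network (euclidean :: 'a topology)"
    and greg: "G_regular TYPE('a) TYPE('g::{topological_group_add,t2_space})"
    and tap: "TAP (Cp :: ('a \<Rightarrow> 'g) set)"
  shows "compact_space (euclidean :: 'a topology)"
proof (rule ccontr)
  assume nc: "\<not> compact_space (euclidean :: 'a topology)"
  then have "\<not> compact (UNIV::'a set)" by (simp add: compact_space_def)
  then obtain \<U> :: "'a set set" where U0: "(\<forall>c\<in>\<U>. open c) \<and> UNIV \<subseteq> \<Union>\<U>"
      "\<not> (\<exists>D\<subseteq>\<U>. finite D \<and> (UNIV::'a set) \<subseteq> \<Union>D)"
    unfolding compact_eq_Heine_Borel not_all not_imp by (elim exE conjE) (blast intro: that)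
  have U: "\<And>t. t\<in>\<U> \<Longrightarrow> open t" "UNIV \<subseteq> \<Union>\<U>"
      "\<And>D. D \<subseteq> \<U> \<Longrightarrow> finite D \<Longrightarrow> \<not> (UNIV::'a set) \<subseteq> \<Union>D"
    using U0 by auto
  obtain \<N>X :: "'a set set" where NX0: "countable \<N>X"
    "\<forall>U x. openin euclidean U \<and> x \<in> U \<longrightarrow> (\<exists>N\<in>\<N>X. x \<in> N \<and> N \<subseteq> U)"
    using networkD[OF netX] by (elim exE conjE) (rule that)
  have NX: "\<And>U x. open U \<Longrightarrow> x \<in> U \<Longrightarrow> \<exists>N\<in>\<N>X. x \<in> N \<and> N \<subseteq> U"
    using NX0(2) by auto
  define Good where "Good = {N\<in>\<N>X. \<exists>W. open W \<and> N \<subseteq> W \<and> (\<exists>Op\<in>\<U>. closure W \<subseteq> Op)}"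
  have "\<forall>N\<in>Good. \<exists>W. open W \<and> N \<subseteq> W \<and> (\<exists>Op\<in>\<U>. closure W \<subseteq> Op)" unfolding Good_def by blast
  then obtain WN where WN: "\<forall>N\<in>Good. open (WN N) \<and> N \<subseteq> WN N \<and> (\<exists>Op\<in>\<U>. closure (WN N) \<subseteq> Op)"
    by (rule bchoice[THEN exE]) blast
  then obtain ON where ON: "\<forall>N\<in>Good. ON N \<in> \<U> \<and> closure (WN N) \<subseteq> ON N"
    by (metis (mono_tags, lifting) bchoice)
  have Gcov: "\<exists>N\<in>Good. y \<in> N" for y
  proof -
    obtain Op where Op: "Op \<in> \<U>" "y \<in> Op" using U(2) by blast
    obtain W where W: "open W" "y \<in> W" "closure W \<subseteq> Op"
      using regular_nbhd[OF reg U(1)[OF Op(1)] Op(2)] by blast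
    obtain N where N: "N \<in> \<N>X" "y \<in> N" "N \<subseteq> W" using NX[OF W(1,2)] by blast
    then have "N \<in> Good" unfolding Good_def using W Op by blast
    then show ?thesis using N by blast
  qed
  have Gne: "Good \<noteq> {}" using Gcov[of undefined] by blast
  have Gc: "countable Good" using NX0(1) unfolding Good_def by (rule countable_subset[rotated]) auto
  define e where "e = from_nat_into Good"
  have re: "range e = Good" unfolding e_def using Gne Gc by simp
  define Wk where "Wk k = (\<Union>j\<le>k. WN (e j))" for k
  have eG: "e j \<in> Good" for j using re by auto
  have Wk_open: "open (Wk k)" for k unfolding Wk_def using WN eG by auto
  have Wk_mono: "j \<le> k \<Longrightarrow> Wk j \<subseteq> Wk k" for j k unfolding Wk_def by (rule UN_mono) auto
  have Wk_cov: "\<exists>k. y \<in> Wk k" for y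
  proof -
    obtain N where "N \<in> Good" "y \<in> N" using Gcov by blast
    then obtain j where "e j = N" using re by auto
    then have "y \<in> WN (e j)" using WN \<open>N \<in> Good\<close> \<open>y \<in> N\<close> by auto
    then show ?thesis unfolding Wk_def by blast
  qed
  have Wk_cl: "closure (Wk k) \<subseteq> (\<Union>j\<le>k. ON (e j))" for k
  proof -
    have "closure (Wk k) \<subseteq> (\<Union>j\<le>k. closure (WN (e j)))"
      unfolding Wk_def by (rule closure_minimal) (auto intro: closure_subset[THEN subsetD])
    also have "\<dots> \<subseteq> (\<Union>j\<le>k. ON (e j))" using ON eG by blast
    finally show ?thesis .
  qed
  have Wk_nc: "\<exists>x. x \<notin> closure (Wk k)" for k
  proof (rule ccontr)
    assume "\<not> (\<exists>x. x \<notin> closure (Wk k))"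
    then have "UNIV \<subseteq> \<Union>((\<lambda>j. ON (e j)) ` {..k})" using Wk_cl[of k] by auto
    moreover have "(\<lambda>j. ON (e j)) ` {..k} \<subseteq> \<U>" using ON eG by auto
    ultimately show False using U(3) by blast
  qed
  then obtain x where x: "\<And>k. x k \<notin> closure (Wk k)" by metis
  have "\<exists>(f::'a \<Rightarrow> 'g) g. f \<in> Cp \<and> g \<noteq> 0 \<and> f (x k) = g \<and> f ` closure (Wk k) \<subseteq> {0}" for k
    by (rule G_regularD[OF greg]) (simp_all add: x)
  then have "\<exists>f::'a \<Rightarrow> 'g. f \<in> Cp \<and> f (x k) \<noteq> 0 \<and> f ` closure (Wk k) \<subseteq> {0}" for k by blast
  then obtain f :: "nat \<Rightarrow> 'a \<Rightarrow> 'g" where f: "\<And>k. f k \<in> Cp \<and> f k (x k) \<noteq> 0 \<and> f k ` closure (Wk k) \<subseteq> {0}"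
    by metis
  have van: "f k y = 0" if "j \<le> k" "y \<in> Wk j" for j k y
  proof -
    have "y \<in> closure (Wk k)" using that Wk_mono closure_subset by blast
    then show ?thesis using f[of k] by blast
  qed
  have inf: "infinite (range f)"
  proof
    assume "finite (range f)"
    then obtain y0 where "y0 \<in> range f" "infinite (f -` {y0})"
      using inf_img_fin_domE[of f UNIV] by auto
    then obtain k0 where k0: "f k0 = y0" by (metis finite.emptyI vimage_singleton_eq ex_in_conv)
    obtain j where j: "x k0 \<in> Wk j" using Wk_cov by blast
    obtain k where k: "k \<ge> j" "k \<in> f -` {y0}"
      using \<open>infinite (f -` {y0})\<close> unfolding infinite_nat_iff_unbounded_le by blast
    have "f k (x k0) = 0" using van[OF k(1) j] .
    moreover have "f k = f k0" using k k0 by simp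
    ultimately show False using f[of k0] by simp
  qed
  have fCp: "range f \<subseteq> Cp" using f by auto
  have ap: "absolutely_productive Cp (range f)"
    unfolding absolutely_productive_def
  proof (intro conjI allI impI fCp, elim conjE)
    fix b :: "nat \<Rightarrow> 'a \<Rightarrow> 'g" and z assume b: "inj b" "range b \<subseteq> range f"
    define \<sigma> where "\<sigma> m = (SOME k. b m = f k)" for m
    have b\<sigma>: "b m = f (\<sigma> m)" for m
    proof -
      have "\<exists>k. b m = f k" using b(2) by auto
      then show ?thesis unfolding \<sigma>_def by (rule someI_ex)
    qed
    have inj\<sigma>: "inj \<sigma>" using b(1) by (metis b\<sigma> injI inj_eq)
    have "\<exists>M. \<forall>m\<ge>M. \<sigma> m \<ge> j" for j
    proof -
      have "finite (\<sigma> -` {..<j})" by (rule finite_vimageI[OF finite_lessThan inj\<sigma>])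
      then obtain k where "\<forall>n\<in>\<sigma> -` {..<j}. n \<le> k" unfolding finite_nat_set_iff_bounded_le by blast
      then have "\<forall>m\<ge>Suc k. \<sigma> m \<ge> j" by (meson lessThan_iff not_less not_less_eq_eq vimageI)
      then show ?thesis by blast
    qed
    then obtain Mb where Mb: "\<And>j m. m \<ge> Mb j \<Longrightarrow> \<sigma> m \<ge> j" by metis
    have bz: "b m y = 0" if "y \<in> Wk j" "m \<ge> Mb j" for y j m
      using van[OF Mb[OF that(2)] that(1)] b\<sigma> by simp
    have stab: "opsum b z n y = opsum b z (Mb j) y" if "y \<in> Wk j" "n \<ge> Mb j" for y j n
      unfolding opsum_apply
      by (rule opsum_const[OF _ that(2)]) (simp add: bz[OF that(1)])
    define jy where "jy y = (SOME j. y \<in> Wk j)" for y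
    have jy: "y \<in> Wk (jy y)" for y unfolding jy_def using Wk_cov by (rule someI_ex)
    define L where "L y = opsum b z (Mb (jy y)) y" for y
    have Lval: "opsum b z n y = L y" if "y \<in> Wk j" "n \<ge> Mb j" for y j n
    proof -
      define n' where "n' = max n (Mb (jy y))"
      have "opsum b z n' y = L y" unfolding L_def n'_def by (rule stab[OF jy]) simp
      moreover have "opsum b z n' y = opsum b z (Mb j) y" unfolding n'_def
        by (rule stab[OF that(1)]) (use that(2) in simp)
      moreover have "opsum b z n y = opsum b z (Mb j) y" by (rule stab[OF that])
      ultimately show ?thesis by simp
    qed
    have bCp: "b m \<in> Cp" for m using b(2) fCp by auto
    have Lc: "continuous_on UNIV L"
    proof -
      have "continuous_on (Wk j) L" for j
      proof -
        have "continuous_on UNIV (opsum b z (Mb j))"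
          using opsum_Cp[where a=b, OF bCp] unfolding Cp_def by blast
        then have "continuous_on (Wk j) (opsum b z (Mb j))" by (rule continuous_on_subset) simp
        moreover have "\<And>y. y \<in> Wk j \<Longrightarrow> opsum b z (Mb j) y = L y" using Lval by simp
        ultimately show ?thesis using continuous_on_cong by blast
      qed
      then have "continuous_on (\<Union>(range Wk)) L"
        by (intro continuous_on_open_Union) (auto simp: Wk_open)
      moreover have "\<Union>(range Wk) = UNIV" using Wk_cov by blast
      ultimately show ?thesis by simp
    qed
    show "\<exists>L. limitin (subtopology euclidean Cp) (opsum b z) L sequentially"
    proof (intro exI[of _ L])
      show "limitin (subtopology euclidean Cp) (opsum b z) L sequentially"
        unfolding limitin_Cp_iff
      proof (intro conjI allI)
        show "L \<in> Cp" using Lc unfolding Cp_def by simp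
        show "\<forall>\<^sub>F n in sequentially. opsum b z n \<in> Cp" using opsum_Cp[where a=b, OF bCp] by simp
        fix y
        obtain j where j: "y \<in> Wk j" using Wk_cov by blast
        show "((\<lambda>n. opsum b z n y) \<longlongrightarrow> L y) sequentially"
          by (rule tendsto_eventually) (unfold eventually_sequentially, use Lval[OF j] in blast)
      qed
    qed
  qed
  have "finite (range f)" using tap fCp ap unfolding TAP_def by blast
  then show False using inf by simp
qed

lemma metrizable_from:
  assumes cpt: "compact_space (euclidean :: 'a::topological_space topology)"
    and haus: "Hausdorff_space (euclidean :: 'a topology)"
    and greg: "G_regular TYPE('a) TYPE('g::{topological_group_add,t2_space})"
    and metG: "metrizable_space (euclidean :: 'g topology)"
    and net: "has_countable_network (subtopology euclidean (Cp :: ('a \<Rightarrow> 'g) set))"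
  shows "metrizable_space (euclidean :: 'a topology)"
proof -
  obtain \<N> :: "('a \<Rightarrow> 'g) set set" where N0: "countable \<N>"
    "\<forall>U f. openin (subtopology euclidean Cp) U \<and> f \<in> U \<longrightarrow> (\<exists>N\<in>\<N>. f \<in> N \<and> N \<subseteq> U)"
    using networkD[OF net] by (elim exE conjE) (rule that)
  have N: "\<And>U f. openin (subtopology euclidean Cp) U \<Longrightarrow> f \<in> U \<Longrightarrow> \<exists>N\<in>\<N>. f \<in> N \<and> N \<subseteq> U"
    using N0 by auto
  define ch where "ch N = (SOME f. f \<in> N \<inter> Cp)" for N :: "('a \<Rightarrow> 'g) set"
  define D where "D = insert 0 (ch ` {N\<in>\<N>. N \<inter> Cp \<noteq> {}})"
  have chN: "ch N \<in> N \<inter> Cp" if "N \<inter> Cp \<noteq> {}" for N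
    unfolding ch_def using that by (metis ex_in_conv someI_ex)
  have Dc: "countable D" unfolding D_def using N0(1) by auto
  have Dne: "D \<noteq> {}" unfolding D_def by simp
  define d where "d = from_nat_into D"
  have rd: "range d = D" unfolding d_def using Dc Dne by simp
  have DCp: "D \<subseteq> Cp" unfolding D_def using chN Cp_zero by auto
  have dCp: "d i \<in> Cp" for i using rd DCp by auto
  have sep: "\<exists>i. d i x \<noteq> d i y" if "x \<noteq> y" for x y :: 'a
  proof -
    have "t1_space (euclidean :: 'a topology)" by (rule Hausdorff_imp_t1_space[OF haus])
    then have "closed {y}" unfolding t1_space_closedin_singleton by simp
    moreover have "x \<notin> {y}" using that by simp
    ultimately have "\<exists>(f::'a \<Rightarrow> 'g) g. f \<in> Cp \<and> g \<noteq> 0 \<and> f x = g \<and> f ` {y} \<subseteq> {0}"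
      by (rule G_regularD[OF greg])
    then obtain f :: "'a \<Rightarrow> 'g" and g where f: "f \<in> Cp" "g \<noteq> 0" "f x = g" "f y = 0" by auto
    obtain O1 O2 where O: "open O1" "open O2" "g \<in> O1" "0 \<in> O2" "O1 \<inter> O2 = {}"
      using hausdorff[OF f(2)] by blast
    define T where "T = {h::'a \<Rightarrow> 'g. h x \<in> O1} \<inter> {h. h y \<in> O2}"
    have "open T" unfolding T_def using O by (intro open_Int open_eval)
    then have "openin (subtopology euclidean Cp) (T \<inter> Cp)"
      unfolding openin_subtopology by (rule_tac x=T in exI) simp
    moreover have "f \<in> T \<inter> Cp" using f O unfolding T_def by auto
    ultimately obtain M where M: "M \<in> \<N>" "f \<in> M" "M \<subseteq> T \<inter> Cp" using N by blast
    then have "M \<inter> Cp \<noteq> {}" by auto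
    then have c: "ch M \<in> T" "ch M \<in> D" using chN M unfolding D_def by auto
    then obtain i where "d i = ch M" using rd by (metis imageE)
    moreover have "ch M x \<noteq> ch M y" using c(1) O(5) unfolding T_def by auto
    ultimately show ?thesis by metis
  qed
  define \<Phi> where "\<Phi> x = (\<lambda>i. d i x)" for x :: 'a
  have contd: "continuous_on UNIV (d i)" for i using dCp[of i] unfolding Cp_def by simp
  have cont: "continuous_map euclidean euclidean \<Phi>"
    unfolding continuous_map_iff_continuous2 \<Phi>_def
    by (rule continuous_on_coordinatewise_then_product) (rule contd)
  have inj: "inj_on \<Phi> (topspace euclidean)"
    unfolding inj_on_def \<Phi>_def using sep by (metis)
  have metP: "metrizable_space (euclidean :: (nat \<Rightarrow> 'g) topology)"
  proof -
    have "metrizable_space (product_topology (\<lambda>_::nat. (euclidean :: 'g topology)) UNIV)"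
      unfolding metrizable_space_product_topology using metG by simp
    then show ?thesis by (simp add: euclidean_product_topology)
  qed
  have hausP: "Hausdorff_space (euclidean :: (nat \<Rightarrow> 'g) topology)"
    by (rule metrizable_imp_Hausdorff_space[OF metP])
  have "closed_map euclidean euclidean \<Phi>"
    by (rule T1_Spaces.continuous_imp_closed_map[OF cont cpt hausP])
  then have "embedding_map euclidean euclidean \<Phi>"
    by (rule injective_closed_imp_embedding_map[OF cont _ inj])
  then have hs: "(euclidean :: 'a topology) homeomorphic_space (subtopology euclidean (\<Phi> ` topspace euclidean))"
    by (rule embedding_map_imp_homeomorphic_space)
  have "metrizable_space (subtopology (euclidean :: (nat \<Rightarrow> 'g) topology) (\<Phi> ` topspace euclidean))"
    by (rule metrizable_space_subtopology[OF metP])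
  then show ?thesis using homeomorphic_metrizable_space[OF hs] by simp
qed

theorem theorem7p8:
  assumes "completely_regular_space (euclidean :: 'a::topological_space topology)"
    and "Hausdorff_space (euclidean :: 'a topology)"
    and "separable_space (euclidean :: 'g::{topological_group_add, t2_space} topology)"
    and "metrizable_space (euclidean :: 'g topology)"
    and "NSS TYPE('g)"
    and "G_regular TYPE('a) TYPE('g)"
  shows "(compact_space (euclidean :: 'a topology) \<and> metrizable_space (euclidean :: 'a topology))
     \<longleftrightarrow> (TAP (Cp :: ('a \<Rightarrow> 'g) set) \<and>
          has_countable_network (subtopology euclidean (Cp :: ('a \<Rightarrow> 'g) set)))"
proof -
  have scG: "second_countable (euclidean :: 'g topology)"
    by (rule separable_metrizable_imp_second_countable[OF assms(4) assms(3)])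
  show ?thesis
  proof
    assume L: "compact_space (euclidean :: 'a topology) \<and> metrizable_space (euclidean :: 'a topology)"
    have tap: "TAP (Cp :: ('a \<Rightarrow> 'g) set)"
      by (rule TAP_Cp[OF assms(5)]) (rule compact_metrizable_seq[OF L[THEN conjunct2] L[THEN conjunct1]])
    have "second_countable (euclidean :: 'a topology)"
      by (rule compact_metrizable_imp_second_countable[OF L[THEN conjunct2] L[THEN conjunct1]])
    then have net: "has_countable_network (subtopology euclidean (Cp :: ('a \<Rightarrow> 'g) set))"
      by (rule Cp_network[OF _ scG])
    show "TAP (Cp :: ('a \<Rightarrow> 'g) set) \<and> has_countable_network (subtopology euclidean (Cp :: ('a \<Rightarrow> 'g) set))"
      using tap net by simp
  next
    assume R: "TAP (Cp :: ('a \<Rightarrow> 'g) set) \<and> has_countable_network (subtopology euclidean (Cp :: ('a \<Rightarrow> 'g) set))"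
    have netX: "has_countable_network (euclidean :: 'a topology)"
      by (rule X_network[OF assms(6) scG R[THEN conjunct2]])
    have reg: "regular_space (euclidean :: 'a topology)"
      by (rule completely_regular_imp_regular_space[OF assms(1)])
    have cpt: "compact_space (euclidean :: 'a topology)"
      by (rule compact_from_TAP[OF reg netX assms(6) R[THEN conjunct1]])
    have met: "metrizable_space (euclidean :: 'a topology)"
      by (rule metrizable_from[OF cpt assms(2) assms(6) assms(4) R[THEN conjunct2]])
    show "compact_space (euclidean :: 'a topology) \<and> metrizable_space (euclidean :: 'a topology)"
      using cpt met by simp
  qed
qed

end
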